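(* In the setting described in the context, given $\epsilon>0$ there is an integer $N(\epsilon)>0$ such that for every $K^u_\alpha$ curve $\gamma$ in $Q$, $$\rho_\gamma\Big(\gamma\cap\bigcup_{i\ge N(\epsilon)}E_i\Big)<\epsilon.$$
   Context: Let $Q=[0,1]^2$. Fix $0<\alpha<1$, $K^u_\alpha=\{(v_1,v_2):|v_2|\le\alpha|v_1|\}$; a $K^u_\alpha$ curve is a $C^2$ curve with all tangent vectors in $K^u_\alpha$; $\rho_\gamma$ is Riemannian (arc length) measure on $\gamma$. Let $E_1,E_2,\dots$ be a countable collection of closed curvilinear rectangles in $Q$, each bounded above and below by subintervals of $\{y=1\}$, $\{y=0\}$ and on the left and right by graphs $x=x^{(i)}(y)$ of smooth functions with $|dx^{(i)}/dy|\le\alpha$. For $z\in Q$, $\ell_z$ is the horizontal line through $z$, $\delta_z(E)=\operatorname{diam}(\ell_z\cap E)$, $\delta_{i,\max}=\max_{z\in Q}\delta_z(E_i)$, $\delta_{i,\min}=\min_{z\in Q}\delta_z(E_i)$. Assume (G1) $\operatorname{int}E_i\cap\operatorname{int}E_j=\emptyset$ for $i\ne j$; (G2) $Q\setminus\bigcup_i\operatorname{int}E_i$ has Lebesgue measure $0$; (G3) $-\sum_i\delta_{i,\max}\log\delta_{i,\min}<\infty$. (In the paper these posts are the domains of $C^2$ diffeomorphisms $f_i$ satisfying further hyperbolicity and distortion conditions, which are not needed to state this result.) *)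

theory Defs
  imports "HOL-Analysis.Analysis"
begin

definition unit_square :: "(real \<times> real) set" where
  "unit_square = {0..1} \<times> {0..1}"

definition Ku_cone :: "real \<Rightarrow> (real \<times> real) set" where
  "Ku_cone \<alpha> = {v. \<bar>snd v\<bar> \<le> \<alpha> * \<bar>fst v\<bar>}"

definition smooth_on_unit :: "(real \<Rightarrow> real) \<Rightarrow> bool" where
  "smooth_on_unit f \<longleftrightarrow> (\<exists>U. open U \<and> {0..1} \<subseteq> U \<and>
      (\<forall>k. \<forall>y\<in>U. ((deriv ^^ k) f) differentiable (at y)))"

definition curv_rect :: "real \<Rightarrow> (real \<times> real) set \<Rightarrow> bool" where
  "curv_rect \<alpha> E \<longleftrightarrow> (\<exists>xl xr. smooth_on_unit xl \<and> smooth_on_unit xr \<and>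
      (\<forall>y\<in>{0..1}. 0 \<le> xl y \<and> xl y < xr y \<and> xr y \<le> 1 \<and>
                   \<bar>deriv xl y\<bar> \<le> \<alpha> \<and> \<bar>deriv xr y\<bar> \<le> \<alpha>) \<and>
      E = {(x, y). 0 \<le> y \<and> y \<le> 1 \<and> xl y \<le> x \<and> x \<le> xr y})"

definition hdelta :: "real \<times> real \<Rightarrow> (real \<times> real) set \<Rightarrow> real" where
  "hdelta z E = diameter ({p. snd p = snd z} \<inter> E)"

definition delta_max :: "(real \<times> real) set \<Rightarrow> real" where
  "delta_max E = (SUP z\<in>unit_square. hdelta z E)"

definition delta_min :: "(real \<times> real) set \<Rightarrow> real" where
  "delta_min E = (INF z\<in>unit_square. hdelta z E)"

definition tangent :: "real \<Rightarrow> real \<Rightarrow> (real \<Rightarrow> real \<times> real) \<Rightarrow> real \<Rightarrow> real \<times> real" where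
  "tangent a b c t = vector_derivative c (at t within {a..b})"

definition C2_curve :: "real \<Rightarrow> real \<Rightarrow> (real \<Rightarrow> real \<times> real) \<Rightarrow> bool" where
  "C2_curve a b c \<longleftrightarrow> a < b \<and>
     (\<forall>t\<in>{a..b}. c differentiable (at t within {a..b})) \<and>
     (\<forall>t\<in>{a..b}. (tangent a b c) differentiable (at t within {a..b})) \<and>
     continuous_on {a..b} (tangent a b (tangent a b c))"

definition Ku_curve :: "real \<Rightarrow> real \<Rightarrow> real \<Rightarrow> (real \<Rightarrow> real \<times> real) \<Rightarrow> bool" where
  "Ku_curve \<alpha> a b c \<longleftrightarrow> C2_curve a b c \<and>
     (\<forall>t\<in>{a..b}. tangent a b c t \<noteq> 0 \<and> tangent a b c t \<in> Ku_cone \<alpha>)"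

definition arc_measure :: "real \<Rightarrow> real \<Rightarrow> (real \<Rightarrow> real \<times> real) \<Rightarrow> (real \<times> real) set \<Rightarrow> real" where
  "arc_measure a b c S = (LINT t : {t\<in>{a..b}. c t \<in> S} | lborel. norm (tangent a b c t))"

end

theory Submission
  imports Defs
begin

lemma smooth_facts:
  assumes "smooth_on_unit f"
  shows "\<And>y. y \<in> {0..1} \<Longrightarrow> (f has_real_derivative deriv f y) (at y)"
    and "continuous_on {0..1} f"
proof -
  obtain U where U: "open U" "{0..1} \<subseteq> U" "\<forall>k. \<forall>y\<in>U. ((deriv ^^ k) f) differentiable (at y)"
    using assms unfolding smooth_on_unit_def by blast
  have d: "f differentiable (at y)" if "y \<in> {0..1}" for y
  proof -
    have "(deriv ^^ 0) f differentiable (at y)" using U that by blast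
    then show ?thesis by simp
  qed
  show "(f has_real_derivative deriv f y) (at y)" if "y \<in> {0..1}" for y
    using d[OF that] DERIV_deriv_iff_real_differentiable by blast
  show "continuous_on {0..1} f"
    using d by (meson continuous_at_imp_continuous_on differentiable_imp_continuous_within)
qed

lemma lip_from_deriv:
  fixes f :: "real \<Rightarrow> real"
  assumes "smooth_on_unit f" "\<forall>y\<in>{0..1}. \<bar>deriv f y\<bar> \<le> \<alpha>"
    and "y1 \<in> {0..1}" "y2 \<in> {0..1}"
  shows "\<bar>f y2 - f y1\<bar> \<le> \<alpha> * \<bar>y2 - y1\<bar>"
proof -
  have *: "\<bar>f v - f u\<bar> \<le> \<alpha> * \<bar>v - u\<bar>" if uv: "u < v" "u \<in> {0..1}" "v \<in> {0..1}" for u v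
  proof -
    have "\<And>x. u \<le> x \<Longrightarrow> x \<le> v \<Longrightarrow> DERIV f x :> deriv f x"
      using smooth_facts(1)[OF assms(1)] uv by auto
    then obtain z where z: "u < z" "z < v" "f v - f u = (v - u) * deriv f z"
      using MVT2[OF uv(1)] by blast
    have "\<bar>deriv f z\<bar> \<le> \<alpha>" using assms(2) z uv by auto
    then show ?thesis using z(3) uv(1)
      by (simp add: abs_mult mult.commute mult_left_mono)
  qed
  show ?thesis
  proof (cases y1 y2 rule: linorder_cases)
    case less then show ?thesis using * assms by blast
  next
    case equal then show ?thesis by simp
  next
    case greater then show ?thesis using *[of y2 y1] assms by (simp add: abs_minus_commute)
  qed
qed


lemma strip_facts:
  fixes xl xr :: "real \<Rightarrow> real"
  assumes sl: "smooth_on_unit xl" and sr: "smooth_on_unit xr"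
    and B: "\<forall>y\<in>{0..1}. 0 \<le> xl y \<and> xl y < xr y \<and> xr y \<le> 1 \<and>
                   \<bar>deriv xl y\<bar> \<le> \<alpha> \<and> \<bar>deriv xr y\<bar> \<le> \<alpha>"
    and E: "E = {(x, y). 0 \<le> y \<and> y \<le> 1 \<and> xl y \<le> x \<and> x \<le> xr y}"
  shows "closed E"
    and "\<And>y. y \<in> {0..1} \<Longrightarrow> xr y - xl y \<le> delta_max E"
    and "\<And>y. y \<in> {0..1} \<Longrightarrow> delta_min E \<le> xr y - xl y"
    and "0 < delta_min E"
    and "\<And>x. xl (1/2) < x \<Longrightarrow> x < xr (1/2) \<Longrightarrow> (x, 1/2) \<in> interior E"
proof -
  have cl: "continuous_on {0..1} xl" and cr: "continuous_on {0..1} xr"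
    using smooth_facts(2) sl sr by auto
  define g where "g p = (fst p - xl (snd p), xr (snd p) - fst p)" for p :: "real \<times> real"
  have cg: "continuous_on (UNIV \<times> {0..1}) g"
    unfolding g_def
    by (intro continuous_intros continuous_on_compose2[OF cl] continuous_on_compose2[OF cr]) auto
  have "E = (UNIV \<times> {0..1}) \<inter> g -` ({0..} \<times> {0..})"
    unfolding E g_def by auto
  then show "closed E"
    using continuous_closed_preimage[OF cg] by (simp add: closed_Times)
  have cg2: "continuous_on (UNIV \<times> {0<..<1}) g"
    using cg by (rule continuous_on_subset) auto
  define Wset where "Wset = (UNIV \<times> {0<..<1}) \<inter> g -` (greaterThan 0 \<times> greaterThan 0)"
  have "open Wset"
    unfolding Wset_def using continuous_open_preimage[OF cg2] by (simp add: open_Times)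
  moreover have "Wset \<subseteq> E" unfolding Wset_def E g_def by auto
  ultimately have OI: "Wset \<subseteq> interior E" by (simp add: interior_maximal)
  show "(x, 1/2) \<in> interior E" if "xl (1/2) < x" "x < xr (1/2)" for x
    using that OI unfolding Wset_def g_def by auto
  have hd: "hdelta z E = xr (snd z) - xl (snd z)" if "snd z \<in> {0..1}" for z
  proof -
    define y0 where "y0 = snd z"
    have S: "{p. snd p = y0} \<inter> E = {xl y0..xr y0} \<times> {y0}"
      unfolding E y0_def using that by auto
    have le: "xl y0 \<le> xr y0" using B that y0_def by (metis atLeastAtMost_iff less_imp_le)
    have "diameter ({xl y0..xr y0} \<times> {y0}) \<le> xr y0 - xl y0"
      by (rule diameter_le) (use le in \<open>auto simp: norm_Pair\<close>)
    moreover have "dist (xl y0, y0) (xr y0, y0) \<le> diameter ({xl y0..xr y0} \<times> {y0})"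
      by (rule diameter_bounded_bound) (use le in \<open>auto simp: bounded_Times\<close>)
    ultimately show ?thesis unfolding hdelta_def y0_def[symmetric] S
      by (simp add: dist_Pair_Pair dist_real_def)
  qed
  have hdb: "hdelta z E \<le> 1" "0 \<le> hdelta z E" if "z \<in> unit_square" for z
    using hd[of z] B that unfolding unit_square_def
    by (force simp: mem_Times_iff)+
  show "xr y - xl y \<le> delta_max E" if "y \<in> {0..1}" for y
  proof -
    have "(0, y) \<in> unit_square" using that unfolding unit_square_def by auto
    moreover have "bdd_above ((\<lambda>z. hdelta z E) ` unit_square)"
      using hdb by (auto intro!: bdd_aboveI)
    ultimately have "hdelta (0,y) E \<le> delta_max E"
      unfolding delta_max_def by (rule cSUP_upper)
    then show ?thesis using hd[of "(0,y)"] that by simp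
  qed
  show "delta_min E \<le> xr y - xl y" if "y \<in> {0..1}" for y
  proof -
    have "(0, y) \<in> unit_square" using that unfolding unit_square_def by auto
    moreover have "bdd_below ((\<lambda>z. hdelta z E) ` unit_square)"
      using hdb by (auto intro!: bdd_belowI)
    ultimately have "delta_min E \<le> hdelta (0,y) E"
      unfolding delta_min_def by (metis (no_types, lifting) cINF_lower)
    then show ?thesis using hd[of "(0,y)"] that by simp
  qed
  obtain y0 where y0: "y0 \<in> {0..1}" "\<forall>y\<in>{0..1}. xr y0 - xl y0 \<le> xr y - xl y"
  proof -
    have "continuous_on {0..1} (\<lambda>y. xr y - xl y)" using cl cr by (intro continuous_intros)
    then show ?thesis using continuous_attains_inf[of "{0..1::real}" "\<lambda>y. xr y - xl y"] that by auto
  qed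
  have "xr y0 - xl y0 \<le> delta_min E"
    unfolding delta_min_def
  proof (rule cINF_greatest)
    show "unit_square \<noteq> {}" unfolding unit_square_def by auto
    fix z assume "z \<in> unit_square"
    then show "xr y0 - xl y0 \<le> hdelta z E"
      using hd[of z] y0 unfolding unit_square_def by (auto simp: mem_Times_iff)
  qed
  moreover have "0 < xr y0 - xl y0" using B y0 by auto
  ultimately show "0 < delta_min E" by linarith
qed


lemma curve_facts:
  fixes c :: "real \<Rightarrow> real \<times> real"
  assumes K: "Ku_curve \<alpha> a b c" and a0: "0 < \<alpha>" and a1: "\<alpha> < 1"
  shows "continuous_on {a..b} c"
    and "\<exists>\<sigma>::real. (\<sigma> = 1 \<or> \<sigma> = -1) \<and>
          (\<forall>t\<in>{a..b}. 0 < \<sigma> * fst (tangent a b c t) \<and> norm (tangent a b c t) \<le> 2 * (\<sigma> * fst (tangent a b c t))) \<and>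
          (\<forall>t1 t2. a \<le> t1 \<longrightarrow> t1 \<le> t2 \<longrightarrow> t2 \<le> b \<longrightarrow>
              \<bar>snd (c t2) - snd (c t1)\<bar> \<le> \<alpha> * (\<sigma> * (fst (c t2) - fst (c t1))) \<and>
              ((\<lambda>t. \<sigma> * fst (tangent a b c t)) has_integral (\<sigma> * (fst (c t2) - fst (c t1)))) {t1..t2})"
proof -
  define T where "T = tangent a b c"
  have ab: "a < b" using K unfolding Ku_curve_def C2_curve_def by auto
  have hv: "(c has_vector_derivative T t) (at t within {a..b})" if "t \<in> {a..b}" for t
    using K that unfolding Ku_curve_def C2_curve_def T_def tangent_def
    by (metis vector_derivative_works)
  show cc: "continuous_on {a..b} c"
    using K unfolding Ku_curve_def C2_curve_def
    by (meson differentiable_imp_continuous_on differentiable_on_def)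
  have cT: "continuous_on {a..b} T"
    using K unfolding Ku_curve_def C2_curve_def T_def
    by (meson differentiable_imp_continuous_on differentiable_on_def)
  have cone: "T t \<noteq> 0" "\<bar>snd (T t)\<bar> \<le> \<alpha> * \<bar>fst (T t)\<bar>" if "t \<in> {a..b}" for t
    using K that unfolding Ku_curve_def T_def Ku_cone_def by auto
  have nz: "fst (T t) \<noteq> 0" if "t \<in> {a..b}" for t
  proof
    assume "fst (T t) = 0"
    then have "snd (T t) = 0" using cone(2)[OF that] by simp
    then show False using cone(1)[OF that] \<open>fst (T t) = 0\<close> by (simp add: prod_eq_iff)
  qed
  define \<sigma> :: real where "\<sigma> = (if fst (T a) > 0 then 1 else -1)"
  have sg: "\<sigma> = 1 \<or> \<sigma> = -1" unfolding \<sigma>_def by auto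
  have ga: "0 < \<sigma> * fst (T a)" using nz[of a] ab unfolding \<sigma>_def by auto
  have cg: "continuous_on {a..b} (\<lambda>t. \<sigma> * fst (T t))"
    using cT by (intro continuous_intros)
  have pos: "0 < \<sigma> * fst (T t)" if t: "t \<in> {a..b}" for t
  proof (rule ccontr)
    assume "\<not> 0 < \<sigma> * fst (T t)"
    then have "\<sigma> * fst (T t) \<le> 0" by simp
    moreover have "continuous_on {a..t} (\<lambda>t. \<sigma> * fst (T t))"
      using cg by (rule continuous_on_subset) (use t in auto)
    ultimately obtain s where s: "a \<le> s" "s \<le> t" "\<sigma> * fst (T s) = 0"
      using IVT2'[of "\<lambda>t. \<sigma> * fst (T t)" t 0 a] ga t by auto
    then have "s \<in> {a..b}" using t by auto
    then show False using nz[of s] s sg by auto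
  qed
  have nb: "norm (T t) \<le> 2 * (\<sigma> * fst (T t))" if t: "t \<in> {a..b}" for t
  proof -
    have "norm (T t) \<le> \<bar>fst (T t)\<bar> + \<bar>snd (T t)\<bar>"
      using norm_Pair_le[of "fst (T t)" "snd (T t)"] by simp
    also have "\<dots> \<le> 2 * \<bar>fst (T t)\<bar>"
    proof -
      have "\<alpha> * \<bar>fst (T t)\<bar> \<le> \<bar>fst (T t)\<bar>"
        using a0 a1 by (intro mult_left_le_one_le) auto
      then show ?thesis using cone(2)[OF t] by linarith
    qed
    also have "\<bar>fst (T t)\<bar> = \<sigma> * fst (T t)" using pos[OF t] sg by auto
    finally show ?thesis .
  qed
  have hx: "((\<lambda>t. fst (c t)) has_vector_derivative fst (T t)) (at t within {a..b})"
    and hy: "((\<lambda>t. snd (c t)) has_vector_derivative snd (T t)) (at t within {a..b})"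
    if "t \<in> {a..b}" for t
    using bounded_linear.has_vector_derivative[OF bounded_linear_fst hv[OF that]]
      bounded_linear.has_vector_derivative[OF bounded_linear_snd hv[OF that]] by auto
  have mono: "\<bar>snd (c t2) - snd (c t1)\<bar> \<le> \<alpha> * (\<sigma> * (fst (c t2) - fst (c t1)))"
    if tt: "a \<le> t1" "t1 \<le> t2" "t2 \<le> b" for t1 t2
  proof -
    have key: "f t1 \<le> f t2" if fdef: "f = (\<lambda>t. \<alpha> * (\<sigma> * fst (c t)) + s * snd (c t))"
      and s: "s = 1 \<or> s = -1" for f s
    proof (rule DERIV_nonneg_imp_increasing_open[OF tt(2)])
      fix t assume t: "t1 < t" "t < t2"
      then have tin: "t \<in> interior {a..b}" using tt by auto
      then have tab: "t \<in> {a..b}" using interior_subset by blast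
      have "((\<lambda>t. \<alpha> * (\<sigma> * fst (c t)) + s * snd (c t)) has_vector_derivative
              \<alpha> * (\<sigma> * fst (T t)) + s * snd (T t)) (at t within {a..b})"
        using hx[OF tab] hy[OF tab] by (intro derivative_intros) auto
      then have "(f has_real_derivative \<alpha> * (\<sigma> * fst (T t)) + s * snd (T t)) (at t)"
        unfolding fdef has_real_derivative_iff_has_vector_derivative at_within_interior[OF tin] .
      moreover have "0 \<le> \<alpha> * (\<sigma> * fst (T t)) + s * snd (T t)"
      proof -
        have "\<bar>s * snd (T t)\<bar> \<le> \<alpha> * \<bar>fst (T t)\<bar>" using cone(2)[OF tab] s by auto
        moreover have "\<bar>fst (T t)\<bar> = \<sigma> * fst (T t)" using pos[OF tab] sg by auto
        then have "\<alpha> * \<bar>fst (T t)\<bar> = \<alpha> * (\<sigma> * fst (T t))" by simp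
        moreover have "- (s * snd (T t)) \<le> \<bar>s * snd (T t)\<bar>" by (rule abs_ge_minus_self)
        ultimately show ?thesis using \<open>\<bar>s * snd (T t)\<bar> \<le> \<alpha> * \<bar>fst (T t)\<bar>\<close> by linarith
      qed
      ultimately show "\<exists>y. (f has_real_derivative y) (at t) \<and> 0 \<le> y" by blast
    next
      have "continuous_on {t1..t2} c" using cc by (rule continuous_on_subset) (use tt in auto)
      then show "continuous_on {t1..t2} f" unfolding fdef by (intro continuous_intros)
    qed
    have "\<alpha> * (\<sigma> * fst (c t1)) + snd (c t1) \<le> \<alpha> * (\<sigma> * fst (c t2)) + snd (c t2)"
      using key[OF refl, of 1] by simp
    moreover have "\<alpha> * (\<sigma> * fst (c t1)) - snd (c t1) \<le> \<alpha> * (\<sigma> * fst (c t2)) - snd (c t2)"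
      using key[OF refl, of "-1"] by simp
    ultimately show ?thesis by (simp add: algebra_simps abs_le_iff)
  qed
  have integ: "((\<lambda>t. \<sigma> * fst (T t)) has_integral (\<sigma> * (fst (c t2) - fst (c t1)))) {t1..t2}"
    if tt: "a \<le> t1" "t1 \<le> t2" "t2 \<le> b" for t1 t2
  proof -
    have "((\<lambda>t. \<sigma> * fst (T t)) has_integral (\<sigma> * fst (c t2) - \<sigma> * fst (c t1))) {t1..t2}"
    proof (rule fundamental_theorem_of_calculus[OF tt(2)])
      fix t assume t: "t \<in> {t1..t2}"
      then have tab: "t \<in> {a..b}" using tt by auto
      have "((\<lambda>t. \<sigma> * fst (c t)) has_vector_derivative \<sigma> * fst (T t)) (at t within {a..b})"
        using hx[OF tab] by (intro derivative_intros) auto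
      then show "((\<lambda>t. \<sigma> * fst (c t)) has_vector_derivative \<sigma> * fst (T t)) (at t within {t1..t2})"
        by (rule has_vector_derivative_within_subset) (use tt in auto)
    qed
    then show ?thesis by (simp add: algebra_simps)
  qed
  show "\<exists>\<sigma>::real. (\<sigma> = 1 \<or> \<sigma> = -1) \<and>
          (\<forall>t\<in>{a..b}. 0 < \<sigma> * fst (tangent a b c t) \<and> norm (tangent a b c t) \<le> 2 * (\<sigma> * fst (tangent a b c t))) \<and>
          (\<forall>t1 t2. a \<le> t1 \<longrightarrow> t1 \<le> t2 \<longrightarrow> t2 \<le> b \<longrightarrow>
              \<bar>snd (c t2) - snd (c t1)\<bar> \<le> \<alpha> * (\<sigma> * (fst (c t2) - fst (c t1))) \<and>
              ((\<lambda>t. \<sigma> * fst (tangent a b c t)) has_integral (\<sigma> * (fst (c t2) - fst (c t1)))) {t1..t2})"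
    using sg pos nb mono integ unfolding T_def by blast
qed


lemma strip_curve_bound:
  fixes c :: "real \<Rightarrow> real \<times> real" and xl xr :: "real \<Rightarrow> real"
  assumes K: "Ku_curve \<alpha> a b c" and a0: "0 < \<alpha>" and a1: "\<alpha> < 1"
    and sq: "c ` {a..b} \<subseteq> unit_square"
    and sl: "smooth_on_unit xl" and sr: "smooth_on_unit xr"
    and B: "\<forall>y\<in>{0..1}. 0 \<le> xl y \<and> xl y < xr y \<and> xr y \<le> 1 \<and>
                   \<bar>deriv xl y\<bar> \<le> \<alpha> \<and> \<bar>deriv xr y\<bar> \<le> \<alpha>"
    and E: "E = {(x, y). 0 \<le> y \<and> y \<le> 1 \<and> xl y \<le> x \<and> x \<le> xr y}"
  shows "(\<integral>\<^sup>+ t. ennreal (norm (tangent a b c t) * indicator {t\<in>{a..b}. c t \<in> E} t) \<partial>lborel)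
           \<le> ennreal (2 * delta_max E / (1 - \<alpha>\<^sup>2))"
proof -
  define A where "A = {t\<in>{a..b}. c t \<in> E}"
  define \<delta> where "\<delta> = delta_max E"
  have cc: "continuous_on {a..b} c" by (rule curve_facts(1)[OF K a0 a1])
  obtain \<sigma> :: real where sg: "\<sigma> = 1 \<or> \<sigma> = -1"
    and pos: "\<forall>t\<in>{a..b}. 0 < \<sigma> * fst (tangent a b c t) \<and> norm (tangent a b c t) \<le> 2 * (\<sigma> * fst (tangent a b c t))"
    and mono: "\<forall>t1 t2. a \<le> t1 \<longrightarrow> t1 \<le> t2 \<longrightarrow> t2 \<le> b \<longrightarrow>
              \<bar>snd (c t2) - snd (c t1)\<bar> \<le> \<alpha> * (\<sigma> * (fst (c t2) - fst (c t1))) \<and>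
              ((\<lambda>t. \<sigma> * fst (tangent a b c t)) has_integral (\<sigma> * (fst (c t2) - fst (c t1)))) {t1..t2}"
    using curve_facts(2)[OF K a0 a1] by blast
  show ?thesis
  proof (cases "A = {}")
    case True
    then show ?thesis unfolding A_def[symmetric] by simp
  next
    case False
    have "closed A"
    proof -
      have "closed ({a..b} \<inter> c -` E)"
        by (rule continuous_closed_preimage[OF cc]) (auto intro: strip_facts(1)[OF sl sr B E])
      moreover have "A = {a..b} \<inter> c -` E" unfolding A_def by auto
      ultimately show ?thesis by simp
    qed
    have Aab: "A \<subseteq> {a..b}" unfolding A_def by auto
    then have bA: "bdd_below A" "bdd_above A" by (meson bdd_above_Icc bdd_below_Icc bdd_above_mono bdd_below_mono)+
    define t1 where "t1 = Inf A"
    define t2 where "t2 = Sup A"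
    have t1A: "t1 \<in> A" unfolding t1_def using closed_contains_Inf[OF False bA(1) \<open>closed A\<close>] .
    have t2A: "t2 \<in> A" unfolding t2_def using closed_contains_Sup[OF False bA(2) \<open>closed A\<close>] .
    have sub: "A \<subseteq> {t1..t2}" unfolding t1_def t2_def using bA by (auto intro: cInf_lower cSup_upper)
    have tt: "a \<le> t1" "t1 \<le> t2" "t2 \<le> b" using t1A t2A sub Aab by auto
    define D where "D = \<sigma> * (fst (c t2) - fst (c t1))"
    have dy: "\<bar>snd (c t2) - snd (c t1)\<bar> \<le> \<alpha> * D" using mono tt unfolding D_def by blast
    have hi: "((\<lambda>t. \<sigma> * fst (tangent a b c t)) has_integral D) {t1..t2}"
      using mono tt unfolding D_def by blast
    obtain x1 y1 where p1: "c t1 = (x1, y1)" by (cases "c t1")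
    obtain x2 y2 where p2: "c t2 = (x2, y2)" by (cases "c t2")
    have E1: "0 \<le> y1" "y1 \<le> 1" "xl y1 \<le> x1" "x1 \<le> xr y1" using t1A p1 unfolding A_def E by auto
    have E2: "0 \<le> y2" "y2 \<le> 1" "xl y2 \<le> x2" "x2 \<le> xr y2" using t2A p2 unfolding A_def E by auto
    have w1: "xr y1 - xl y1 \<le> \<delta>" and w2: "xr y2 - xl y2 \<le> \<delta>"
      using strip_facts(2)[OF sl sr B E] E1 E2 unfolding \<delta>_def by auto
    have lip: "\<bar>xl y2 - xl y1\<bar> \<le> \<alpha> * \<bar>y2 - y1\<bar>"
      using lip_from_deriv[OF sl, of \<alpha> y1 y2] B E1 E2 by auto
    have dy': "\<bar>y2 - y1\<bar> \<le> \<alpha> * D" using dy p1 p2 by simp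
    have "\<alpha> * \<bar>y2 - y1\<bar> \<le> \<alpha> * (\<alpha> * D)" using dy' a0 by (intro mult_left_mono) auto
    then have lip2: "\<bar>xl y2 - xl y1\<bar> \<le> \<alpha>\<^sup>2 * D" using lip by (simp add: power2_eq_square)
    have "D \<le> \<delta> + \<alpha>\<^sup>2 * D"
    proof (cases "\<sigma> = 1")
      case True
      then have "D = x2 - x1" unfolding D_def using p1 p2 by simp
      then show ?thesis using E1 E2 w2 lip2 by (simp add: abs_le_iff)
    next
      case False
      then have "\<sigma> = -1" using sg by simp
      then have "D = x1 - x2" unfolding D_def using p1 p2 by simp
      then show ?thesis using E1 E2 w1 lip2 by (simp add: abs_le_iff)
    qed
    then have "D * (1 - \<alpha>\<^sup>2) \<le> \<delta>" by (simp add: algebra_simps)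
    moreover have "0 < 1 - \<alpha>\<^sup>2"
    proof -
      have "\<alpha>\<^sup>2 < 1" using a0 a1 by (simp add: power_less_one_iff)
      then show ?thesis by simp
    qed
    ultimately have Dle: "D \<le> \<delta> / (1 - \<alpha>\<^sup>2)" by (simp add: pos_le_divide_eq)
    have "(\<integral>\<^sup>+ t. ennreal (norm (tangent a b c t) * indicator A t) \<partial>lborel)
          \<le> (\<integral>\<^sup>+ t. ennreal (2 * (\<sigma> * fst (tangent a b c t))) * indicator {t1..t2} t \<partial>lborel)"
    proof (rule nn_integral_mono)
      fix t
      show "ennreal (norm (tangent a b c t) * indicator A t)
            \<le> ennreal (2 * (\<sigma> * fst (tangent a b c t))) * indicator {t1..t2} t"
      proof (cases "t \<in> A")
        case True
        then have "t \<in> {a..b}" "t \<in> {t1..t2}" using Aab sub by auto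
        then show ?thesis using True pos by (auto intro: ennreal_leI)
      next
        case False
        then show ?thesis by simp
      qed
    qed
    also have "\<dots> = ennreal (2 * D)"
    proof (rule nn_integral_has_integral_lebesgue')
      show "\<And>x. x \<in> {t1..t2} \<Longrightarrow> 0 \<le> 2 * (\<sigma> * fst (tangent a b c x))"
        using pos tt by (auto intro: less_imp_le)
      show "((\<lambda>t. 2 * (\<sigma> * fst (tangent a b c t))) has_integral 2 * D) {t1..t2}"
        using has_integral_mult_right[OF hi, of 2] by simp
    qed
    also have "\<dots> \<le> ennreal (2 * \<delta> / (1 - \<alpha>\<^sup>2))"
      using Dle by (intro ennreal_leI) simp
    finally show ?thesis unfolding A_def \<delta>_def .
  qed
qed


lemma delta_summable:
  fixes \<alpha> :: real and E :: "nat \<Rightarrow> (real \<times> real) set"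
    and XL XR :: "nat \<Rightarrow> real \<Rightarrow> real"
  assumes S: "\<And>i. smooth_on_unit (XL i) \<and> smooth_on_unit (XR i) \<and>
      (\<forall>y\<in>{0..1}. 0 \<le> XL i y \<and> XL i y < XR i y \<and> XR i y \<le> 1 \<and>
                   \<bar>deriv (XL i) y\<bar> \<le> \<alpha> \<and> \<bar>deriv (XR i) y\<bar> \<le> \<alpha>) \<and>
      E i = {(x, y). 0 \<le> y \<and> y \<le> 1 \<and> XL i y \<le> x \<and> x \<le> XR i y}"
    and G1: "\<And>i j. i \<noteq> j \<Longrightarrow> interior (E i) \<inter> interior (E j) = {}"
    and G3: "summable (\<lambda>i. - delta_max (E i) * ln (delta_min (E i)))"
  shows "summable (\<lambda>i. delta_max (E i))"
proof -
  define I where "I i = {XL i (1/2) <..< XR i (1/2)}" for i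
  note sf = strip_facts[OF conjunct1[OF S] conjunct1[OF conjunct2[OF S]]
      conjunct1[OF conjunct2[OF conjunct2[OF S]]] conjunct2[OF conjunct2[OF conjunct2[OF S]]]]
  have half: "(1/2::real) \<in> {0..1}" by simp
  have lt: "XL i (1/2) < XR i (1/2)" "0 \<le> XL i (1/2)" "XR i (1/2) \<le> 1" for i
    using S[of i] half by blast+
  have disj: "disjoint_family I"
    unfolding disjoint_family_on_def
  proof (intro ballI impI)
    fix i j :: nat assume "i \<noteq> j"
    show "I i \<inter> I j = {}"
    proof (rule ccontr)
      assume "I i \<inter> I j \<noteq> {}"
      then obtain x where "x \<in> I i" "x \<in> I j" by blast
      then have "(x, 1/2) \<in> interior (E i)" "(x, 1/2) \<in> interior (E j)"
        using sf(5) unfolding I_def by auto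
      then show False using G1[OF \<open>i \<noteq> j\<close>] by blast
    qed
  qed
  have "(\<Union>i. I i) \<subseteq> {0..1}"
  proof
    fix x assume "x \<in> (\<Union>i. I i)"
    then obtain i where "x \<in> I i" by blast
    then show "x \<in> {0..1}" using lt(2,3)[of i] unfolding I_def by auto
  qed
  then have "emeasure lborel (\<Union>i. I i) \<le> emeasure lborel {0..1::real}"
    by (intro emeasure_mono) auto
  then have fin: "emeasure lborel (\<Union>i. I i) \<noteq> \<infinity>" by (auto simp: top_unique)
  have "(\<lambda>i. measure lborel (I i)) sums measure lborel (\<Union>i. I i)"
    by (rule measure_UNION[OF _ disj fin]) (auto simp: I_def)
  moreover have "measure lborel (I i) = XR i (1/2) - XL i (1/2)" for i
    using lt[of i] unfolding I_def by (simp add: measure_def)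
  ultimately have "summable (\<lambda>i. XR i (1/2) - XL i (1/2))" by (simp add: sums_summable)
  then have lim: "(\<lambda>i. XR i (1/2) - XL i (1/2)) \<longlonglongrightarrow> 0" by (rule summable_LIMSEQ_zero)
  obtain N0 where N0: "\<And>n. n \<ge> N0 \<Longrightarrow> XR n (1/2) - XL n (1/2) < exp (-1)"
    using order_tendstoD(2)[OF lim, of "exp (-1)"] by (auto simp: eventually_sequentially)
  show ?thesis
  proof (rule summable_comparison_test'[OF G3])
    fix n assume "n \<ge> N0"
    have dm: "0 < delta_min (E n)" using sf(4) .
    have "delta_min (E n) \<le> XR n (1/2) - XL n (1/2)" using sf(3) half by blast
    then have "delta_min (E n) \<le> exp (-1)" using N0[OF \<open>n \<ge> N0\<close>] by linarith
    then have "ln (delta_min (E n)) \<le> -1" using dm by (metis exp_gt_zero ln_exp ln_le_cancel_iff)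
    moreover have "0 \<le> delta_max (E n)"
    proof -
      have z: "(0::real) \<in> {0..1}" by simp
      have "XL n 0 < XR n 0" using S[of n] z by blast
      then show ?thesis using sf(2)[OF z, of n] by linarith
    qed
    ultimately have "delta_max (E n) * 1 \<le> delta_max (E n) * (- ln (delta_min (E n)))"
      by (intro mult_left_mono) auto
    then have "delta_max (E n) \<le> - delta_max (E n) * ln (delta_min (E n))" by simp
    then show "norm (delta_max (E n)) \<le> - delta_max (E n) * ln (delta_min (E n))"
      using \<open>0 \<le> delta_max (E n)\<close> by simp
  qed
qed


lemma tangent_cont:
  assumes "Ku_curve \<alpha> a b c"
  shows "continuous_on {a..b} (tangent a b c)"
  using assms unfolding Ku_curve_def C2_curve_def
  by (meson differentiable_imp_continuous_on differentiable_on_def)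

theorem lemma10p5:
  fixes \<alpha> \<epsilon> :: real and E :: "nat \<Rightarrow> (real \<times> real) set"
  assumes "0 < \<alpha>" and "\<alpha> < 1"
    and rect: "\<And>i. curv_rect \<alpha> (E i)"
    and G1: "\<And>i j. i \<noteq> j \<Longrightarrow> interior (E i) \<inter> interior (E j) = {}"
    and G2: "unit_square - (\<Union>i. interior (E i)) \<in> null_sets lborel"
    and G3: "summable (\<lambda>i. - delta_max (E i) * ln (delta_min (E i)))"
    and "\<epsilon> > 0"
  shows "\<exists>N::nat. N > 0 \<and> (\<forall>a b c. Ku_curve \<alpha> a b c \<and> c ` {a..b} \<subseteq> unit_square \<longrightarrow>
            arc_measure a b c (\<Union>i\<in>{N..}. E i) < \<epsilon>)"
proof -
  note a0 = \<open>0 < \<alpha>\<close> and a1 = \<open>\<alpha> < 1\<close>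
  have ex: "\<forall>i. \<exists>xl xr. smooth_on_unit xl \<and> smooth_on_unit xr \<and>
      (\<forall>y\<in>{0..1}. 0 \<le> xl y \<and> xl y < xr y \<and> xr y \<le> 1 \<and>
                   \<bar>deriv xl y\<bar> \<le> \<alpha> \<and> \<bar>deriv xr y\<bar> \<le> \<alpha>) \<and>
      E i = {(x, y). 0 \<le> y \<and> y \<le> 1 \<and> xl y \<le> x \<and> x \<le> xr y}"
    using rect unfolding curv_rect_def by blast
  obtain XL where XL: "\<forall>i. \<exists>xr. smooth_on_unit (XL i) \<and> smooth_on_unit xr \<and>
      (\<forall>y\<in>{0..1}. 0 \<le> XL i y \<and> XL i y < xr y \<and> xr y \<le> 1 \<and>
                   \<bar>deriv (XL i) y\<bar> \<le> \<alpha> \<and> \<bar>deriv xr y\<bar> \<le> \<alpha>) \<and>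
      E i = {(x, y). 0 \<le> y \<and> y \<le> 1 \<and> XL i y \<le> x \<and> x \<le> xr y}"
    using choice[OF ex] by blast
  obtain XR where S: "\<And>i. smooth_on_unit (XL i) \<and> smooth_on_unit (XR i) \<and>
      (\<forall>y\<in>{0..1}. 0 \<le> XL i y \<and> XL i y < XR i y \<and> XR i y \<le> 1 \<and>
                   \<bar>deriv (XL i) y\<bar> \<le> \<alpha> \<and> \<bar>deriv (XR i) y\<bar> \<le> \<alpha>) \<and>
      E i = {(x, y). 0 \<le> y \<and> y \<le> 1 \<and> XL i y \<le> x \<and> x \<le> XR i y}"
    using choice[OF XL] by blast
  note S1 = conjunct1[OF S] and S2 = conjunct1[OF conjunct2[OF S]]
    and S3 = conjunct1[OF conjunct2[OF conjunct2[OF S]]] and S4 = conjunct2[OF conjunct2[OF conjunct2[OF S]]]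
  have sumd: "summable (\<lambda>i. delta_max (E i))"
    by (rule delta_summable[OF S G1 G3])
  have dpos: "0 \<le> delta_max (E i)" for i
  proof -
    have z: "(0::real) \<in> {0..1}" by simp
    have "XL i 0 < XR i 0" using S[of i] z by blast
    then show ?thesis using strip_facts(2)[OF S1 S2 S3 S4 z, of i] by linarith
  qed
  have a2: "0 < 1 - \<alpha>\<^sup>2"
  proof -
    have "\<alpha>\<^sup>2 < 1" using a0 a1 by (simp add: power_less_one_iff)
    then show ?thesis by simp
  qed
  define C where "C = 2 / (1 - \<alpha>\<^sup>2)"
  have Cpos: "0 < C" unfolding C_def using a2 by simp
  have sumC: "summable (\<lambda>i. C * delta_max (E i))" using sumd by (rule summable_mult)
  obtain N where N: "\<forall>n\<ge>N. norm (\<Sum>i. C * delta_max (E (i + n))) < \<epsilon>"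
    using suminf_exist_split[OF \<open>\<epsilon> > 0\<close> sumC] by blast
  define n where "n = Suc N"
  have "norm (\<Sum>i. C * delta_max (E (i + n))) < \<epsilon>" using N unfolding n_def by (meson le_SucI order_refl)
  then have tail: "(\<Sum>i. C * delta_max (E (i + n))) < \<epsilon>" by simp
  have sumT: "summable (\<lambda>i. C * delta_max (E (i + n)))"
    using summable_ignore_initial_segment[OF sumC, of n] by simp
  have Tnn: "0 \<le> C * delta_max (E (i + n))" for i using Cpos dpos by simp
  show ?thesis
  proof (intro exI[of _ n] conjI allI impI)
    show "0 < n" unfolding n_def by simp
    fix a b c assume abc: "Ku_curve \<alpha> a b c \<and> c ` {a..b} \<subseteq> unit_square"
    then have K: "Ku_curve \<alpha> a b c" and sq: "c ` {a..b} \<subseteq> unit_square" by auto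
    define A where "A = {t\<in>{a..b}. c t \<in> (\<Union>i\<in>{n..}. E i)}"
    define Ai where "Ai i = {t\<in>{a..b}. c t \<in> E i}" for i
    define f where "f t = norm (tangent a b c t)" for t
    have cc: "continuous_on {a..b} c" by (rule curve_facts(1)[OF K a0 a1])
    have bnd: "(\<integral>\<^sup>+ t. ennreal (f t * indicator (Ai i) t) \<partial>lborel) \<le> ennreal (C * delta_max (E i))" for i
      using strip_curve_bound[OF K a0 a1 sq S1 S2 S3 S4] unfolding f_def Ai_def C_def by simp
    have meas: "(\<lambda>t. ennreal (f t * indicator (Ai i) t)) \<in> borel_measurable lborel" for i
    proof -
      have "closed (Ai i)"
      proof -
        have "closed ({a..b} \<inter> c -` E i)"
          by (rule continuous_closed_preimage[OF cc]) (auto intro: strip_facts(1)[OF S1 S2 S3 S4])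
        moreover have "Ai i = {a..b} \<inter> c -` E i" unfolding Ai_def by auto
        ultimately show ?thesis by simp
      qed
      moreover have "continuous_on (Ai i) f"
        unfolding f_def
        by (rule continuous_on_subset[OF continuous_on_norm[OF tangent_cont[OF K]]]) (auto simp: Ai_def)
      ultimately have "(\<lambda>t. indicator (Ai i) t *\<^sub>R f t) \<in> borel_measurable borel"
        by (intro borel_measurable_continuous_on_indicator) auto
      then show ?thesis by (simp add: mult.commute)
    qed
    have pw: "ennreal (indicator A t * f t) \<le> (\<Sum>i. ennreal (f t * indicator (Ai (i + n)) t))" for t
    proof (cases "t \<in> A")
      case True
      then obtain j where j: "j \<ge> n" "c t \<in> E j" "t \<in> {a..b}" unfolding A_def by auto
      then have "t \<in> Ai (j - n + n)" unfolding Ai_def by simp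
      then have "ennreal (indicator A t * f t) = ennreal (f t * indicator (Ai ((j - n) + n)) t)"
        using True by simp
      also have "\<dots> = (\<Sum>i\<in>{j - n}. ennreal (f t * indicator (Ai (i + n)) t))" by simp
      also have "\<dots> \<le> (\<Sum>i. ennreal (f t * indicator (Ai (i + n)) t))"
        by (rule sum_le_suminf) auto
      finally show ?thesis .
    next
      case False
      then show ?thesis by simp
    qed
    have nn: "(\<integral>\<^sup>+ t. ennreal (indicator A t * f t) \<partial>lborel) \<le> ennreal (\<Sum>i. C * delta_max (E (i + n)))"
    proof -
      have "(\<integral>\<^sup>+ t. ennreal (indicator A t * f t) \<partial>lborel)
           \<le> (\<integral>\<^sup>+ t. (\<Sum>i. ennreal (f t * indicator (Ai (i + n)) t)) \<partial>lborel)"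
        by (rule nn_integral_mono) (rule pw)
      also have "\<dots> = (\<Sum>i. \<integral>\<^sup>+ t. ennreal (f t * indicator (Ai (i + n)) t) \<partial>lborel)"
        by (rule nn_integral_suminf) (rule meas)
      also have "\<dots> \<le> (\<Sum>i. ennreal (C * delta_max (E (i + n))))"
        by (intro suminf_le) (auto intro: bnd)
      also have "\<dots> = ennreal (\<Sum>i. C * delta_max (E (i + n)))"
        by (rule suminf_ennreal2[OF Tnn sumT])
      finally show ?thesis .
    qed
    have "arc_measure a b c (\<Union>i\<in>{n..}. E i) = integral\<^sup>L lborel (\<lambda>t. indicator A t * f t)"
      unfolding arc_measure_def set_lebesgue_integral_def A_def f_def by simp
    also have "\<dots> < \<epsilon>"
    proof (cases "integrable lborel (\<lambda>t. indicator A t * f t)")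
      case True
      have "integral\<^sup>L lborel (\<lambda>t. indicator A t * f t) = enn2real (\<integral>\<^sup>+ t. ennreal (indicator A t * f t) \<partial>lborel)"
        by (rule integral_eq_nn_integral) (use True in \<open>auto simp: f_def\<close>)
      also have "\<dots> \<le> enn2real (ennreal (\<Sum>i. C * delta_max (E (i + n))))"
        by (rule enn2real_mono[OF nn]) simp
      also have "\<dots> = (\<Sum>i. C * delta_max (E (i + n)))"
        using suminf_nonneg[OF sumT Tnn] by simp
      finally show ?thesis using tail by linarith
    next
      case False
      then show ?thesis using not_integrable_integral_eq[OF False] \<open>\<epsilon> > 0\<close> by simp
    qed
    finally show "arc_measure a b c (\<Union>i\<in>{n..}. E i) < \<epsilon>" .
  qed
qed

end
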